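(* Let two processes $\sigma$ and $\zeta$ be constructed from initial states $\sigma(\cdot,0),\zeta(\cdot,0)\in\Sigma$ with the same realization of the space-time Poisson point process. (a) For a positive integer $m$ let $D_m(t)=\{x:\zeta(x,t)\ge\sigma(x,t)+m\}$. If $x\in D_m(t)$, then $\zeta(x,t)$ has no maximizer $y\in D_m(0)^c$; and if $x\in D_m(t)^c$, then $\sigma(x,t)$ has no maximizer $y\in D_m(0)$. (b) Suppose $\sigma(y,0)\le\zeta(y,0)\le\sigma(y,0)+h$ for all $y\in\mathbb R^d$, for a fixed positive integer $h$. Then $\sigma(x,t)\le\zeta(x,t)\le\sigma(x,t)+h$ for all $x$ and $t\ge0$, and with $A(t)=\{x:\zeta(x,t)=\sigma(x,t)+h\}$ we have $A(t)=\{x:\sigma(x,t)\text{ has a maximizer }y\in A(0)\}$. (c) If $h=1$ in (b), then additionally $A(t)^c=\{x:\zeta(x,t)\text{ has a maximizer }y\in A(0)^c\}$.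
   Context: Order: for $x,y\in\mathbb R^d$, $x\le y$ iff $x_i\le y_i$ for all $i$; $|x|_\infty=\max_i|x_i|$; $d\ge2$. $\mathbb Z^*=\mathbb Z\cup\{\pm\infty\}$. The state space $\Sigma$ is the set of functions $\sigma:\mathbb R^d\to\mathbb Z^*$ such that (i) $x\le y$ implies $\sigma(x)\le\sigma(y)$; (ii) for every cube $[-q\mathbf 1,q\mathbf 1]$ there are finite partitions $-q=s_i^0<\dots<s_i^{m_i}=q$ of each coordinate axis such that $\sigma$ is constant on each rectangle $\prod_i[s_i^{k_i},s_i^{k_i+1})$; (iii) for every $b\in\mathbb R^d$, $\lim_{M\to\infty}\sup\{|y|_\infty^{-d/(d+1)}\sigma(y):y\le b,|y|_\infty\ge M\}=-\infty$. A rate-one Poisson point process on $\mathbb R^d\times(0,\infty)$ is given; $\mathbf H((y,0),(x,t))$ is the maximal number of Poisson points on a strictly increasing chain (coordinatewise order in $\mathbb R^{d+1}$) in $\{(\eta,s):y<\eta\le x,0<s\le t\}$ ($=0$ if $t=0$). Processes are defined by $\sigma(x,t)=\sup_{y\le x}\{\sigma(y,0)+\mathbf H((y,0),(x,t))\}$ and similarly for $\zeta$ (the supremum is attained almost surely). We say $\sigma(x,t)$ has a maximizer $y$ if $y\le x$ and $\sigma(x,t)=\sigma(y,0)+\mathbf H((y,0),(x,t))$. *)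

theory Defs
  imports "HOL-Analysis.Analysis" "HOL-Probability.Probability"
begin


definition cle :: "real ^ 'd \<Rightarrow> real ^ 'd \<Rightarrow> bool" where
  "cle x y \<longleftrightarrow> (\<forall>i. x $ i \<le> y $ i)"

definition clt :: "real ^ 'd \<Rightarrow> real ^ 'd \<Rightarrow> bool" where
  "clt x y \<longleftrightarrow> (\<forall>i. x $ i < y $ i)"

definition linf :: "real ^ 'd::finite \<Rightarrow> real" where
  "linf x = Max (range (\<lambda>i. \<bar>x $ i\<bar>))"

definition zstar :: "ereal set" where
  "zstar = range (\<lambda>k::int. ereal (of_int k)) \<union> {\<infinity>, -\<infinity>}"

definition StateSpace :: "(real ^ 'd::finite \<Rightarrow> ereal) set" where
  "StateSpace = {\<sigma>.
     (\<forall>x. \<sigma> x \<in> zstar) \<and>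
     (\<forall>x y. cle x y \<longrightarrow> \<sigma> x \<le> \<sigma> y) \<and>
     (\<forall>q::real. q > 0 \<longrightarrow>
        (\<exists>(s :: 'd \<Rightarrow> nat \<Rightarrow> real) (m :: 'd \<Rightarrow> nat).
           (\<forall>i. s i 0 = -q \<and> s i (m i) = q \<and> (\<forall>k<m i. s i k < s i (Suc k))) \<and>
           (\<forall>k :: 'd \<Rightarrow> nat. (\<forall>i. k i < m i) \<longrightarrow>
              (\<forall>x y. (\<forall>i. s i (k i) \<le> x $ i \<and> x $ i < s i (Suc (k i))) \<and>
                     (\<forall>i. s i (k i) \<le> y $ i \<and> y $ i < s i (Suc (k i)))
                     \<longrightarrow> \<sigma> x = \<sigma> y)))) \<and>
     (\<forall>b. ((\<lambda>M::real. Sup {ereal (linf y powr (- real CARD('d) / (real CARD('d) + 1))) * \<sigma> y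
                              | y. cle y b \<and> linf y \<ge> M}) \<longlongrightarrow> -\<infinity>) at_top)}"

definition sptlt :: "(real ^ 'd) \<times> real \<Rightarrow> (real ^ 'd) \<times> real \<Rightarrow> bool" where
  "sptlt p q \<longleftrightarrow> clt (fst p) (fst q) \<and> snd p < snd q"

definition Hpp :: "((real ^ 'd) \<times> real) set \<Rightarrow> real ^ 'd \<Rightarrow> real ^ 'd \<Rightarrow> real \<Rightarrow> ereal" where
  "Hpp P y x t = Sup {ereal (real (length ps)) | ps.
      sorted_wrt sptlt ps \<and>
      (\<forall>p\<in>set ps. p \<in> P \<and> clt y (fst p) \<and> cle (fst p) x \<and> 0 < snd p \<and> snd p \<le> t)}"

definition proc :: "(real ^ 'd \<Rightarrow> ereal) \<Rightarrow> ((real ^ 'd) \<times> real) set \<Rightarrow> real ^ 'd \<Rightarrow> real \<Rightarrow> ereal" where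
  "proc \<sigma>0 P x t = (SUP y\<in>{y. cle y x}. \<sigma>0 y + Hpp P y x t)"

definition is_maximizer :: "(real ^ 'd \<Rightarrow> ereal) \<Rightarrow> ((real ^ 'd) \<times> real) set \<Rightarrow> real ^ 'd \<Rightarrow> real \<Rightarrow> real ^ 'd \<Rightarrow> bool" where
  "is_maximizer \<sigma>0 P x t y \<longleftrightarrow> cle y x \<and> proc \<sigma>0 P x t = \<sigma>0 y + Hpp P y x t"

text \<open>Rate-one Poisson point process on R^d x (0,infinity), as a random point set N on the
  probability space M.\<close>
definition bounded_borel_st :: "((real ^ 'd::finite) \<times> real) set \<Rightarrow> bool" where
  "bounded_borel_st B \<longleftrightarrow> B \<in> sets lborel \<and> bounded B \<and> B \<subseteq> UNIV \<times> {0<..}"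

definition poisson_pp :: "'w measure \<Rightarrow> ('w \<Rightarrow> ((real ^ 'd::finite) \<times> real) set) \<Rightarrow> bool" where
  "poisson_pp M N \<longleftrightarrow> prob_space M \<and>
     (\<forall>\<omega>\<in>space M. N \<omega> \<subseteq> UNIV \<times> {0<..}) \<and>
     (\<forall>B. bounded_borel_st B \<longrightarrow>
        {\<omega>\<in>space M. finite (N \<omega> \<inter> B)} \<in> sets M \<and>
        (\<lambda>\<omega>. card (N \<omega> \<inter> B)) \<in> measurable M (count_space UNIV) \<and>
        (\<forall>n. measure M {\<omega>\<in>space M. finite (N \<omega> \<inter> B) \<and> card (N \<omega> \<inter> B) = n}
              = pmf (poisson_pmf (measure lborel B)) n)) \<and>
     (\<forall>(J::nat set) B. finite J \<longrightarrow> (\<forall>j\<in>J. bounded_borel_st (B j)) \<longrightarrow>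
        disjoint_family_on B J \<longrightarrow>
        prob_space.indep_vars M (\<lambda>_. count_space UNIV) (\<lambda>j \<omega>. card (N \<omega> \<inter> B j)) J)"

end

theory Submission
  imports Defs
begin


lemma pmf_sums_1: "(\<lambda>n. pmf (p::nat pmf) n) sums 1"
proof -
  have "(\<lambda>n. measure (measure_pmf p) {n}) sums measure (measure_pmf p) (\<Union>n. {n})"
    by (rule measure_pmf.finite_measure_UNION) (auto simp: disjoint_family_on_def)
  then show ?thesis by (simp add: measure_pmf_single)
qed

lemma finite_ae:
  assumes pp: "poisson_pp M N" and B: "bounded_borel_st B"
  shows "AE \<omega> in M. finite (N \<omega> \<inter> B)"
proof -
  interpret prob_space M using pp by (simp add: poisson_pp_def)
  define A where "A n = {\<omega>\<in>space M. finite (N \<omega> \<inter> B) \<and> card (N \<omega> \<inter> B) = n}" for n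
  have F: "{\<omega>\<in>space M. finite (N \<omega> \<inter> B)} \<in> events"
    and C: "(\<lambda>\<omega>. card (N \<omega> \<inter> B)) \<in> measurable M (count_space UNIV)"
    and P: "\<And>n. prob (A n) = pmf (poisson_pmf (measure lborel B)) n"
    using pp B by (auto simp: poisson_pp_def A_def)
  have meas: "A n \<in> events" for n
  proof -
    have "(\<lambda>\<omega>. card (N \<omega> \<inter> B)) -` {n} \<inter> space M \<in> events"
      by (rule measurable_sets[OF C]) auto
    then have "{\<omega>\<in>space M. card (N \<omega> \<inter> B) = n} \<in> events"
      by (simp add: vimage_def Int_def conj_commute)
    then have "{\<omega>\<in>space M. finite (N \<omega> \<inter> B)} \<inter> {\<omega>\<in>space M. card (N \<omega> \<inter> B) = n} \<in> events"
      using F by blast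
    then show ?thesis unfolding A_def by (simp add: Int_def conj_commute) (smt (verit) Collect_cong)
  qed
  have "(\<lambda>n. prob (A n)) sums prob (\<Union>n. A n)"
    apply (rule finite_measure_UNION)
    using meas apply blast
    by (auto simp: disjoint_family_on_def A_def)
  then have "(\<lambda>n. pmf (poisson_pmf (measure lborel B)) n) sums prob (\<Union>n. A n)"
    by (simp add: P)
  then have "prob (\<Union>n. A n) = 1" using pmf_sums_1 sums_unique2 by blast
  moreover have "(\<Union>n. A n) = {\<omega>\<in>space M. finite (N \<omega> \<inter> B)}"
    unfolding A_def by auto
  ultimately have "AE \<omega> in M. \<omega> \<in> {\<omega>\<in>space M. finite (N \<omega> \<inter> B)}"
    by (intro AE_prob_1) simp
  then show ?thesis by eventually_elim auto
qed

definition boxk :: "nat \<Rightarrow> ((real ^ 'd::finite) \<times> real) set" where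
  "boxk k = cbox (\<chi> i. - real k) (\<chi> i. real k) \<times> {0<..real k}"

lemma boxk_bb: "bounded_borel_st (boxk k)"
proof -
  have e: "boxk k = (cbox (\<chi> i. - real k) (\<chi> i. real k) \<times> {0..real k}) \<inter> (UNIV \<times> {0<..})"
    unfolding boxk_def by auto
  have "boxk k \<in> sets borel" unfolding e
    by (intro sets.Int borel_closed borel_open closed_Times open_Times) auto
  moreover have "bounded (boxk k)" unfolding boxk_def
    by (intro bounded_Times bounded_cbox) simp
  ultimately show ?thesis unfolding bounded_borel_st_def boxk_def by auto
qed

lemma finite_all_ae:
  assumes pp: "poisson_pp M (N :: 'w \<Rightarrow> ((real ^ 'd::finite) \<times> real) set)"
  shows "AE \<omega> in M. \<forall>k. finite (N \<omega> \<inter> boxk k)"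
  using finite_ae[OF pp boxk_bb] by (simp add: AE_all_countable)



lemma sorted_sptlt_distinct: "sorted_wrt sptlt ps \<Longrightarrow> distinct ps"
  by (induction ps) (auto simp: sptlt_def)

lemma Hpp_nat:
  fixes P :: "((real ^ 'd::finite) \<times> real) set"
  assumes fin: "finite (P \<inter> C)"
    and sub: "\<And>p. clt y (fst p) \<Longrightarrow> cle (fst p) x \<Longrightarrow> 0 < snd p \<Longrightarrow> snd p \<le> t \<Longrightarrow> p \<in> C"
  shows "\<exists>n::nat. Hpp P y x t = ereal (real n)"
proof -
  define S where "S = {ereal (real (length ps)) | ps.
      sorted_wrt sptlt ps \<and>
      (\<forall>p\<in>set ps. p \<in> P \<and> clt y (fst p) \<and> cle (fst p) x \<and> 0 < snd p \<and> snd p \<le> t)}"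
  have "S \<subseteq> (\<lambda>n. ereal (real n)) ` {..card (P \<inter> C)}"
  proof
    fix s assume "s \<in> S"
    then obtain ps where s: "s = ereal (real (length ps))" and so: "sorted_wrt sptlt ps"
      and all: "\<forall>p\<in>set ps. p \<in> P \<and> clt y (fst p) \<and> cle (fst p) x \<and> 0 < snd p \<and> snd p \<le> t"
      unfolding S_def by blast
    have "distinct ps" using so by (rule sorted_sptlt_distinct)
    then have "length ps = card (set ps)" by (simp add: distinct_card)
    also have "\<dots> \<le> card (P \<inter> C)"
      using all sub by (intro card_mono fin) auto
    finally show "s \<in> (\<lambda>n. ereal (real n)) ` {..card (P \<inter> C)}" using s by auto
  qed
  then have "finite S" by (rule finite_subset) simp
  moreover have "ereal (real (length ([]::((real ^ 'd) \<times> real) list))) \<in> S" unfolding S_def by force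
  then have "S \<noteq> {}" by blast
  ultimately have "Sup S \<in> S" by (simp add: cSup_eq_Max)
  then show ?thesis unfolding Hpp_def S_def[symmetric] unfolding S_def by blast
qed

lemma box_ex:
  fixes y x :: "real ^ 'd::finite"
  shows "\<exists>k. \<forall>p. clt y (fst p) \<longrightarrow> cle (fst p) x \<longrightarrow> 0 < snd p \<longrightarrow> snd p \<le> t \<longrightarrow> p \<in> boxk k"
proof -
  obtain k :: nat where k: "(\<Sum>i\<in>UNIV. \<bar>y $ i\<bar> + \<bar>x $ i\<bar>) + \<bar>t\<bar> \<le> real k"
    using real_arch_simple by blast
  have "\<forall>p. clt y (fst p) \<longrightarrow> cle (fst p) x \<longrightarrow> 0 < snd p \<longrightarrow> snd p \<le> t \<longrightarrow> p \<in> boxk k"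
  proof (intro allI impI)
    fix p :: "(real ^ 'd) \<times> real"
    assume a: "clt y (fst p)" "cle (fst p) x" "0 < snd p" "snd p \<le> t"
    have "- real k \<le> fst p $ i \<and> fst p $ i \<le> real k" for i
    proof -
      have "\<bar>fst p $ i\<bar> \<le> \<bar>y $ i\<bar> + \<bar>x $ i\<bar>"
        using a(1,2) unfolding clt_def cle_def by (smt (verit))
      also have "\<dots> \<le> (\<Sum>i\<in>UNIV. \<bar>y $ i\<bar> + \<bar>x $ i\<bar>)"
        by (rule member_le_sum) auto
      finally show ?thesis using k by (smt (verit))
    qed
    moreover have "snd p \<le> real k" using a k
      by (smt (verit) abs_ge_self sum_nonneg abs_ge_zero)
    ultimately show "p \<in> boxk k" unfolding boxk_def using a(3)
      by (cases p) (simp add: mem_box_cart)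
  qed
  then show ?thesis by blast
qed

lemma Hpp_fin:
  assumes "\<forall>k. finite (P \<inter> boxk k)"
  shows "\<exists>n::nat. Hpp P y x t = ereal (real n)"
proof -
  obtain k where "\<forall>p. clt y (fst p) \<longrightarrow> cle (fst p) x \<longrightarrow> 0 < snd p \<longrightarrow> snd p \<le> t \<longrightarrow> p \<in> boxk k"
    using box_ex by blast
  then show ?thesis using assms by (intro Hpp_nat[where C = "boxk k"]) auto
qed

lemma ar1: "(z::ereal) + ereal n \<ge> s + ereal n + ereal m \<Longrightarrow> z \<ge> s + ereal m"
  by (cases z; cases s) auto

lemma ar2: "(\<sigma>::ereal) + ereal h = s + ereal h + ereal H \<Longrightarrow> s + ereal H \<le> \<sigma> \<Longrightarrow> \<sigma> = s + ereal H"
  by (cases \<sigma>; cases s) auto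

lemma zstar_cases: "a \<in> zstar \<Longrightarrow> a = \<infinity> \<or> a = -\<infinity> \<or> (\<exists>k::int. a = ereal (of_int k))"
  unfolding zstar_def by auto

lemma ar3: "a \<in> zstar \<Longrightarrow> b \<in> zstar \<Longrightarrow> a \<le> b \<Longrightarrow> b \<le> a + 1 \<Longrightarrow> b \<noteq> a + 1 \<Longrightarrow> b = a"
proof -
  assume a: "a \<in> zstar" and b: "b \<in> zstar" and h: "a \<le> b" "b \<le> a + 1" "b \<noteq> a + 1"
  show "b = a"
  proof (cases a)
    case (real r)
    then obtain k :: int where k: "a = ereal (of_int k)" using zstar_cases[OF a] by auto
    show ?thesis
    proof (cases b)
      case (real q)
      then obtain j :: int where j: "b = ereal (of_int j)" using zstar_cases[OF b] by auto
      have "k \<le> j" "j \<le> k + 1" "j \<noteq> k + 1" using h unfolding k j by (auto simp: one_ereal_def)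
      then have "j = k" by linarith
      then show ?thesis using k j by simp
    qed (use h k in auto)
  qed (use h in auto)
qed

lemma ar4: "(s::ereal) \<noteq> s + 1 \<Longrightarrow> s + ereal H \<le> \<sigma> \<Longrightarrow> s + ereal H = \<sigma> + 1 \<Longrightarrow> False"
  by (cases s; cases \<sigma>) (auto simp: one_ereal_def)

lemma zstar_add: "a \<in> zstar \<Longrightarrow> a + ereal (real n) \<in> zstar"
proof -
  assume a: "a \<in> zstar"
  show ?thesis
  proof (cases "\<exists>k::int. a = ereal (of_int k)")
    case True
    then obtain k :: int where k: "a = ereal (of_int k)" by blast
    have "a + ereal (real n) = ereal (of_int (k + int n))" using k by simp
    then show ?thesis unfolding zstar_def by blast
  next
    case False
    then have "a = \<infinity> \<or> a = -\<infinity>" using zstar_cases[OF a] by blast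
    then show ?thesis using a by auto
  qed
qed



lemma upper: "cle y x \<Longrightarrow> s0 y + Hpp P y x t \<le> proc s0 P x t"
  unfolding proc_def by (rule SUP_upper) simp

locale core =
  fixes P :: "((real ^ 'd::finite) \<times> real) set" and \<sigma>0 \<zeta>0 :: "real ^ 'd \<Rightarrow> ereal"
  assumes mx: "\<forall>x t. t \<ge> 0 \<longrightarrow> (\<exists>y. is_maximizer \<sigma>0 P x t y) \<and> (\<exists>y. is_maximizer \<zeta>0 P x t y)"
    and fin: "\<forall>k. finite (P \<inter> boxk k)"
    and zs: "\<forall>x. \<sigma>0 x \<in> zstar" and zz: "\<forall>x. \<zeta>0 x \<in> zstar"
begin

lemma H: obtains n :: nat where "Hpp P y x t = ereal (real n)"
  using Hpp_fin[OF fin] by blast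

lemma partA:
  assumes "m > 0" "t \<ge> 0"
  shows "(proc \<zeta>0 P x t \<ge> proc \<sigma>0 P x t + ereal (real m) \<longrightarrow>
           \<not> (\<exists>y. is_maximizer \<zeta>0 P x t y \<and> \<not> (\<zeta>0 y \<ge> \<sigma>0 y + ereal (real m)))) \<and>
        (\<not> (proc \<zeta>0 P x t \<ge> proc \<sigma>0 P x t + ereal (real m)) \<longrightarrow>
           \<not> (\<exists>y. is_maximizer \<sigma>0 P x t y \<and> \<zeta>0 y \<ge> \<sigma>0 y + ereal (real m)))"
proof (intro conjI impI notI)
  assume ge: "proc \<zeta>0 P x t \<ge> proc \<sigma>0 P x t + ereal (real m)"
  assume "\<exists>y. is_maximizer \<zeta>0 P x t y \<and> \<not> (\<zeta>0 y \<ge> \<sigma>0 y + ereal (real m))"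
  then obtain y where y: "cle y x" "proc \<zeta>0 P x t = \<zeta>0 y + Hpp P y x t"
    and n: "\<not> (\<zeta>0 y \<ge> \<sigma>0 y + ereal (real m))" unfolding is_maximizer_def by blast
  obtain k :: nat where k: "Hpp P y x t = ereal (real k)" using H by blast
  have "\<sigma>0 y + Hpp P y x t \<le> proc \<sigma>0 P x t" using upper[OF y(1)] .
  then have "\<sigma>0 y + Hpp P y x t + ereal (real m) \<le> proc \<sigma>0 P x t + ereal (real m)"
    by (rule add_right_mono)
  also have "\<dots> \<le> \<zeta>0 y + Hpp P y x t" using ge y(2) by simp
  finally have "\<zeta>0 y \<ge> \<sigma>0 y + ereal (real m)" unfolding k by (rule ar1)
  then show False using n by simp
next
  assume nge: "\<not> (proc \<zeta>0 P x t \<ge> proc \<sigma>0 P x t + ereal (real m))"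
  assume "\<exists>y. is_maximizer \<sigma>0 P x t y \<and> \<zeta>0 y \<ge> \<sigma>0 y + ereal (real m)"
  then obtain y where y: "cle y x" "proc \<sigma>0 P x t = \<sigma>0 y + Hpp P y x t"
    and g: "\<zeta>0 y \<ge> \<sigma>0 y + ereal (real m)" unfolding is_maximizer_def by blast
  have "proc \<sigma>0 P x t + ereal (real m) = \<sigma>0 y + ereal (real m) + Hpp P y x t"
    using y(2) by (simp add: ac_simps)
  also have "\<dots> \<le> \<zeta>0 y + Hpp P y x t" using g by (rule add_right_mono)
  also have "\<dots> \<le> proc \<zeta>0 P x t" using upper[OF y(1)] .
  finally show False using nge by simp
qed

lemma partB1:
  assumes hyp: "\<forall>y. \<sigma>0 y \<le> \<zeta>0 y \<and> \<zeta>0 y \<le> \<sigma>0 y + ereal (real h)" and t: "t \<ge> 0"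
  shows "proc \<sigma>0 P x t \<le> proc \<zeta>0 P x t \<and> proc \<zeta>0 P x t \<le> proc \<sigma>0 P x t + ereal (real h)"
proof
  obtain y where y: "cle y x" "proc \<sigma>0 P x t = \<sigma>0 y + Hpp P y x t"
    using mx t unfolding is_maximizer_def by blast
  have "\<sigma>0 y + Hpp P y x t \<le> \<zeta>0 y + Hpp P y x t" using hyp by (intro add_right_mono) auto
  also have "\<dots> \<le> proc \<zeta>0 P x t" using upper[OF y(1)] .
  finally show "proc \<sigma>0 P x t \<le> proc \<zeta>0 P x t" using y(2) by simp
next
  obtain y where y: "cle y x" "proc \<zeta>0 P x t = \<zeta>0 y + Hpp P y x t"
    using mx t unfolding is_maximizer_def by blast
  have "\<zeta>0 y + Hpp P y x t \<le> \<sigma>0 y + ereal (real h) + Hpp P y x t" using hyp by (intro add_right_mono) auto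
  also have "\<dots> = (\<sigma>0 y + Hpp P y x t) + ereal (real h)" by (simp add: ac_simps)
  also have "\<dots> \<le> proc \<sigma>0 P x t + ereal (real h)" using upper[OF y(1)] by (rule add_right_mono)
  finally show "proc \<zeta>0 P x t \<le> proc \<sigma>0 P x t + ereal (real h)" using y(2) by simp
qed

lemma partB2:
  assumes hyp: "\<forall>y. \<sigma>0 y \<le> \<zeta>0 y \<and> \<zeta>0 y \<le> \<sigma>0 y + ereal (real h)" and t: "t \<ge> 0"
  shows "{x. proc \<zeta>0 P x t = proc \<sigma>0 P x t + ereal (real h)}
              = {x. \<exists>y. is_maximizer \<sigma>0 P x t y \<and> \<zeta>0 y = \<sigma>0 y + ereal (real h)}"
proof (rule set_eqI, rule iffI)
  fix x assume "x \<in> {x. proc \<zeta>0 P x t = proc \<sigma>0 P x t + ereal (real h)}"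
  then have eq: "proc \<zeta>0 P x t = proc \<sigma>0 P x t + ereal (real h)" by simp
  obtain y where y: "cle y x" "proc \<zeta>0 P x t = \<zeta>0 y + Hpp P y x t"
    using mx t unfolding is_maximizer_def by blast
  obtain k :: nat where k: "Hpp P y x t = ereal (real k)" using H by blast
  have up: "\<sigma>0 y + ereal (real k) \<le> proc \<sigma>0 P x t" using upper[OF y(1), of \<sigma>0 P t] k by simp
  then have "\<sigma>0 y + ereal (real k) + ereal (real h) \<le> proc \<sigma>0 P x t + ereal (real h)"
    by (rule add_right_mono)
  also have "\<dots> = \<zeta>0 y + ereal (real k)" using eq y(2) k by simp
  finally have "\<zeta>0 y \<ge> \<sigma>0 y + ereal (real h)" by (rule ar1)
  moreover have "\<zeta>0 y \<le> \<sigma>0 y + ereal (real h)" using hyp by blast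
  ultimately have zeq: "\<zeta>0 y = \<sigma>0 y + ereal (real h)" by (rule antisym[rotated])
  have "proc \<sigma>0 P x t + ereal (real h) = \<sigma>0 y + ereal (real h) + ereal (real k)"
    using eq y(2) k by (simp only: zeq)
  then have "proc \<sigma>0 P x t = \<sigma>0 y + ereal (real k)" using up by (rule ar2)
  then have "is_maximizer \<sigma>0 P x t y" unfolding is_maximizer_def using y(1) k by simp
  then show "x \<in> {x. \<exists>y. is_maximizer \<sigma>0 P x t y \<and> \<zeta>0 y = \<sigma>0 y + ereal (real h)}"
    using zeq by blast
next
  fix x assume "x \<in> {x. \<exists>y. is_maximizer \<sigma>0 P x t y \<and> \<zeta>0 y = \<sigma>0 y + ereal (real h)}"
  then obtain y where y: "cle y x" "proc \<sigma>0 P x t = \<sigma>0 y + Hpp P y x t"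
    and zeq: "\<zeta>0 y = \<sigma>0 y + ereal (real h)" unfolding is_maximizer_def by blast
  have "proc \<sigma>0 P x t + ereal (real h) = \<zeta>0 y + Hpp P y x t" using y(2) zeq by (simp add: ac_simps)
  also have "\<dots> \<le> proc \<zeta>0 P x t" using upper[OF y(1)] .
  finally have "proc \<sigma>0 P x t + ereal (real h) \<le> proc \<zeta>0 P x t" .
  moreover have "proc \<zeta>0 P x t \<le> proc \<sigma>0 P x t + ereal (real h)" using partB1[OF hyp t, of x] by blast
  ultimately show "x \<in> {x. proc \<zeta>0 P x t = proc \<sigma>0 P x t + ereal (real h)}"
    by simp
qed

lemma proc_zstar:
  assumes "\<forall>x. s0 x \<in> zstar" "\<exists>y. is_maximizer s0 P x t y"
  shows "proc s0 P x t \<in> zstar"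
proof -
  obtain y where y: "proc s0 P x t = s0 y + Hpp P y x t" using assms(2) unfolding is_maximizer_def by blast
  obtain k :: nat where k: "Hpp P y x t = ereal (real k)" using H by blast
  have "s0 y \<in> zstar" using assms(1) by blast
  then show ?thesis unfolding y k by (rule zstar_add)
qed

lemma partC:
  assumes hyp: "\<forall>y. \<sigma>0 y \<le> \<zeta>0 y \<and> \<zeta>0 y \<le> \<sigma>0 y + ereal (real 1)" and t: "t \<ge> 0"
  shows "- {x. proc \<zeta>0 P x t = proc \<sigma>0 P x t + ereal (real 1)}
              = {x. \<exists>y. is_maximizer \<zeta>0 P x t y \<and> \<not> (\<zeta>0 y = \<sigma>0 y + ereal (real 1))}"
proof (rule set_eqI, rule iffI)
  fix x assume "x \<in> - {x. proc \<zeta>0 P x t = proc \<sigma>0 P x t + ereal (real 1)}"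
  then have ne: "proc \<zeta>0 P x t \<noteq> proc \<sigma>0 P x t + 1" by (simp add: one_ereal_def)
  have b: "proc \<sigma>0 P x t \<le> proc \<zeta>0 P x t" "proc \<zeta>0 P x t \<le> proc \<sigma>0 P x t + 1"
    using partB1[OF hyp t, of x] by (auto simp: one_ereal_def)
  have eqz: "proc \<zeta>0 P x t = proc \<sigma>0 P x t"
    using mx t zs zz b ne by (intro ar3 proc_zstar) auto
  obtain y where y: "cle y x" "proc \<sigma>0 P x t = \<sigma>0 y + Hpp P y x t"
    using mx t unfolding is_maximizer_def by blast
  have l1: "proc \<sigma>0 P x t \<le> \<zeta>0 y + Hpp P y x t" unfolding y(2) using hyp by (intro add_right_mono) auto
  have l2: "\<zeta>0 y + Hpp P y x t \<le> proc \<zeta>0 P x t" using upper[OF y(1)] .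
  have mz: "proc \<zeta>0 P x t = \<zeta>0 y + Hpp P y x t" using l1 l2 eqz by (metis order_antisym)
  have "\<zeta>0 y \<noteq> \<sigma>0 y + 1"
  proof
    assume "\<zeta>0 y = \<sigma>0 y + 1"
    then have "proc \<zeta>0 P x t = proc \<sigma>0 P x t + 1" using mz y(2) by (simp add: ac_simps)
    then show False using ne by simp
  qed
  then have "\<exists>y. is_maximizer \<zeta>0 P x t y \<and> \<zeta>0 y \<noteq> \<sigma>0 y + 1"
    using mz y(1) unfolding is_maximizer_def by blast
  then show "x \<in> {x. \<exists>y. is_maximizer \<zeta>0 P x t y \<and> \<not> (\<zeta>0 y = \<sigma>0 y + ereal (real 1))}"
    by (simp add: one_ereal_def)
next
  fix x assume "x \<in> {x. \<exists>y. is_maximizer \<zeta>0 P x t y \<and> \<not> (\<zeta>0 y = \<sigma>0 y + ereal (real 1))}"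
  then obtain y where y: "cle y x" "proc \<zeta>0 P x t = \<zeta>0 y + Hpp P y x t"
    and nz: "\<zeta>0 y \<noteq> \<sigma>0 y + 1" unfolding is_maximizer_def by (auto simp: one_ereal_def)
  have zy: "\<zeta>0 y = \<sigma>0 y" using zs zz hyp nz by (intro ar3) (auto simp: one_ereal_def)
  obtain k :: nat where k: "Hpp P y x t = ereal (real k)" using H by blast
  have "proc \<zeta>0 P x t \<noteq> proc \<sigma>0 P x t + 1"
  proof
    assume e: "proc \<zeta>0 P x t = proc \<sigma>0 P x t + 1"
    have "\<sigma>0 y + ereal (real k) \<le> proc \<sigma>0 P x t" using upper[OF y(1), of \<sigma>0 P t] k by simp
    moreover have "\<sigma>0 y + ereal (real k) = proc \<sigma>0 P x t + 1" using e y(2) zy k by simp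
    moreover have "\<sigma>0 y \<noteq> \<sigma>0 y + 1" using nz zy by simp
    ultimately show False using ar4 by blast
  qed
  then show "x \<in> - {x. proc \<zeta>0 P x t = proc \<sigma>0 P x t + ereal (real 1)}"
    by (simp add: one_ereal_def)
qed

end

theorem lemma9p1:
  fixes M :: "'w measure" and N :: "'w \<Rightarrow> ((real ^ 'd::finite) \<times> real) set"
    and \<sigma>0 \<zeta>0 :: "real ^ 'd \<Rightarrow> ereal"
  assumes d2: "CARD('d) \<ge> 2"
    and pp: "poisson_pp M N"
    and \<sigma>0: "\<sigma>0 \<in> StateSpace" and \<zeta>0: "\<zeta>0 \<in> StateSpace"
    and attained: "AE \<omega> in M. \<forall>x t. t \<ge> 0 \<longrightarrow>
                      (\<exists>y. is_maximizer \<sigma>0 (N \<omega>) x t y) \<and> (\<exists>y. is_maximizer \<zeta>0 (N \<omega>) x t y)"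
  shows
    "(AE \<omega> in M. \<forall>(m::nat) x t. m > 0 \<longrightarrow> t \<ge> 0 \<longrightarrow>
        (proc \<zeta>0 (N \<omega>) x t \<ge> proc \<sigma>0 (N \<omega>) x t + ereal (real m) \<longrightarrow>
           \<not> (\<exists>y. is_maximizer \<zeta>0 (N \<omega>) x t y \<and> \<not> (\<zeta>0 y \<ge> \<sigma>0 y + ereal (real m)))) \<and>
        (\<not> (proc \<zeta>0 (N \<omega>) x t \<ge> proc \<sigma>0 (N \<omega>) x t + ereal (real m)) \<longrightarrow>
           \<not> (\<exists>y. is_maximizer \<sigma>0 (N \<omega>) x t y \<and> \<zeta>0 y \<ge> \<sigma>0 y + ereal (real m))))
     \<and>
     (\<forall>h::nat. h > 0 \<longrightarrow> (\<forall>y. \<sigma>0 y \<le> \<zeta>0 y \<and> \<zeta>0 y \<le> \<sigma>0 y + ereal (real h)) \<longrightarrow>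
        (AE \<omega> in M.
           (\<forall>x t. t \<ge> 0 \<longrightarrow> proc \<sigma>0 (N \<omega>) x t \<le> proc \<zeta>0 (N \<omega>) x t \<and>
                               proc \<zeta>0 (N \<omega>) x t \<le> proc \<sigma>0 (N \<omega>) x t + ereal (real h)) \<and>
           (\<forall>t. t \<ge> 0 \<longrightarrow>
              {x. proc \<zeta>0 (N \<omega>) x t = proc \<sigma>0 (N \<omega>) x t + ereal (real h)}
              = {x. \<exists>y. is_maximizer \<sigma>0 (N \<omega>) x t y \<and> \<zeta>0 y = \<sigma>0 y + ereal (real h)}) \<and>
           (h = 1 \<longrightarrow> (\<forall>t. t \<ge> 0 \<longrightarrow>
              - {x. proc \<zeta>0 (N \<omega>) x t = proc \<sigma>0 (N \<omega>) x t + ereal (real h)}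
              = {x. \<exists>y. is_maximizer \<zeta>0 (N \<omega>) x t y \<and> \<not> (\<zeta>0 y = \<sigma>0 y + ereal (real h))}))))"
proof -
  have zs: "\<forall>x. \<sigma>0 x \<in> zstar" using \<sigma>0 unfolding StateSpace_def by blast
  have zz: "\<forall>x. \<zeta>0 x \<in> zstar" using \<zeta>0 unfolding StateSpace_def by blast
  have good: "AE \<omega> in M. core (N \<omega>) \<sigma>0 \<zeta>0"
    using attained finite_all_ae[OF pp]
    by eventually_elim (unfold core_def, intro conjI zs zz; assumption)
  show ?thesis
  proof (intro conjI allI impI)
    show "AE \<omega> in M. \<forall>(m::nat) x t. m > 0 \<longrightarrow> t \<ge> 0 \<longrightarrow>
        (proc \<zeta>0 (N \<omega>) x t \<ge> proc \<sigma>0 (N \<omega>) x t + ereal (real m) \<longrightarrow>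
           \<not> (\<exists>y. is_maximizer \<zeta>0 (N \<omega>) x t y \<and> \<not> (\<zeta>0 y \<ge> \<sigma>0 y + ereal (real m)))) \<and>
        (\<not> (proc \<zeta>0 (N \<omega>) x t \<ge> proc \<sigma>0 (N \<omega>) x t + ereal (real m)) \<longrightarrow>
           \<not> (\<exists>y. is_maximizer \<sigma>0 (N \<omega>) x t y \<and> \<zeta>0 y \<ge> \<sigma>0 y + ereal (real m)))"
      using good
    proof eventually_elim
      case (elim \<omega>)
      show ?case
      proof (intro allI impI)
        fix m :: nat and x and t :: real assume "m > 0" "t \<ge> 0"
        then show "(proc \<zeta>0 (N \<omega>) x t \<ge> proc \<sigma>0 (N \<omega>) x t + ereal (real m) \<longrightarrow>
           \<not> (\<exists>y. is_maximizer \<zeta>0 (N \<omega>) x t y \<and> \<not> (\<zeta>0 y \<ge> \<sigma>0 y + ereal (real m)))) \<and>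
        (\<not> (proc \<zeta>0 (N \<omega>) x t \<ge> proc \<sigma>0 (N \<omega>) x t + ereal (real m)) \<longrightarrow>
           \<not> (\<exists>y. is_maximizer \<sigma>0 (N \<omega>) x t y \<and> \<zeta>0 y \<ge> \<sigma>0 y + ereal (real m)))"
          by (rule core.partA[OF elim])
      qed
    qed
  next
    fix h :: nat
    assume h: "h > 0" and hyp: "\<forall>y. \<sigma>0 y \<le> \<zeta>0 y \<and> \<zeta>0 y \<le> \<sigma>0 y + ereal (real h)"
    show "AE \<omega> in M.
           (\<forall>x t. t \<ge> 0 \<longrightarrow> proc \<sigma>0 (N \<omega>) x t \<le> proc \<zeta>0 (N \<omega>) x t \<and>
                               proc \<zeta>0 (N \<omega>) x t \<le> proc \<sigma>0 (N \<omega>) x t + ereal (real h)) \<and>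
           (\<forall>t. t \<ge> 0 \<longrightarrow>
              {x. proc \<zeta>0 (N \<omega>) x t = proc \<sigma>0 (N \<omega>) x t + ereal (real h)}
              = {x. \<exists>y. is_maximizer \<sigma>0 (N \<omega>) x t y \<and> \<zeta>0 y = \<sigma>0 y + ereal (real h)}) \<and>
           (h = 1 \<longrightarrow> (\<forall>t. t \<ge> 0 \<longrightarrow>
              - {x. proc \<zeta>0 (N \<omega>) x t = proc \<sigma>0 (N \<omega>) x t + ereal (real h)}
              = {x. \<exists>y. is_maximizer \<zeta>0 (N \<omega>) x t y \<and> \<not> (\<zeta>0 y = \<sigma>0 y + ereal (real h))}))"
      using good
    proof eventually_elim
      case (elim \<omega>)
      have B1: "\<forall>x t. t \<ge> 0 \<longrightarrow> proc \<sigma>0 (N \<omega>) x t \<le> proc \<zeta>0 (N \<omega>) x t \<and>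
                   proc \<zeta>0 (N \<omega>) x t \<le> proc \<sigma>0 (N \<omega>) x t + ereal (real h)"
      proof (intro allI impI)
        fix x t :: "_" assume t: "(t::real) \<ge> 0"
        show "proc \<sigma>0 (N \<omega>) x t \<le> proc \<zeta>0 (N \<omega>) x t \<and>
                   proc \<zeta>0 (N \<omega>) x t \<le> proc \<sigma>0 (N \<omega>) x t + ereal (real h)"
          by (rule core.partB1[OF elim hyp t])
      qed
      have B2: "\<forall>t. t \<ge> 0 \<longrightarrow>
              {x. proc \<zeta>0 (N \<omega>) x t = proc \<sigma>0 (N \<omega>) x t + ereal (real h)}
              = {x. \<exists>y. is_maximizer \<sigma>0 (N \<omega>) x t y \<and> \<zeta>0 y = \<sigma>0 y + ereal (real h)}"
      proof (intro allI impI)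
        fix t :: real assume t: "t \<ge> 0"
        show "{x. proc \<zeta>0 (N \<omega>) x t = proc \<sigma>0 (N \<omega>) x t + ereal (real h)}
              = {x. \<exists>y. is_maximizer \<sigma>0 (N \<omega>) x t y \<and> \<zeta>0 y = \<sigma>0 y + ereal (real h)}"
          by (rule core.partB2[OF elim hyp t])
      qed
      have B3: "h = 1 \<longrightarrow> (\<forall>t. t \<ge> 0 \<longrightarrow>
              - {x. proc \<zeta>0 (N \<omega>) x t = proc \<sigma>0 (N \<omega>) x t + ereal (real h)}
              = {x. \<exists>y. is_maximizer \<zeta>0 (N \<omega>) x t y \<and> \<not> (\<zeta>0 y = \<sigma>0 y + ereal (real h))})"
      proof (intro allI impI)
        fix t :: real assume h1: "h = 1" and t: "t \<ge> 0"
        have hyp1: "\<forall>y. \<sigma>0 y \<le> \<zeta>0 y \<and> \<zeta>0 y \<le> \<sigma>0 y + ereal (real 1)" using hyp h1 by simp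
        show "- {x. proc \<zeta>0 (N \<omega>) x t = proc \<sigma>0 (N \<omega>) x t + ereal (real h)}
              = {x. \<exists>y. is_maximizer \<zeta>0 (N \<omega>) x t y \<and> \<not> (\<zeta>0 y = \<sigma>0 y + ereal (real h))}"
          unfolding h1 by (rule core.partC[OF elim hyp1 t])
      qed
      show ?case using B1 B2 B3 by (intro conjI)
    qed
  qed
qed

end
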